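(* Let $3\le t\le w<n$ and suppose a Steiner system $S(t,w,n)$ exists. Then $$q'_0(t,w,n)\le \frac{\binom{n-1}{t-1}}{\binom{w-1}{t-1}}-\frac{\binom{n-t+2}{2}}{\binom{w-t+2}{2}}+\min_{S}\ \max_{D\in S'}\ \chi(D)+1,$$ where the minimum is over all Steiner systems $S$ of type $S(t,w,n)$ and $S'$ is the set of all $S(2,w-t+2,n-t+2)$ systems derived from $S$ (by removing a $(t-2)$-subset of points).
   Context: $\mathbb{Z}_q=\{0,\dots,q-1\}$ (an alphabet); $\mathrm{wt}$ = number of nonzero coordinates; $d$ = Hamming distance; $J_q(n,w)$ = weight-$w$ words of $\mathbb{Z}_q^n$. An $(n,w,d)_q$ code of size $M$ is a subset $C\subseteq J_q(n,w)$ with $|C|=M$ and pairwise distances at least $d$. A Steiner system $S(t,k,n)$ is a pair $(N,B)$, $|N|=n$, $B$ a set of $k$-subsets (blocks) of $N$ with every $t$-subset of $N$ in exactly one block. For $\alpha\subset N$ with $0<|\alpha|<t$, the derived system is $(N\setminus\alpha,\{\beta\setminus\alpha:\alpha\subseteq\beta\in B\})$, an $S(t-|\alpha|,k-|\alpha|,n-|\alpha|)$. For an $S(2,k,n)$ system $D$, $\chi(D)$ is the minimum number of classes in a partition of its blocks such that distinct blocks in the same class are disjoint. For $t,k,n$ such that an $S(t,k,n)$ exists, $q'_0(t,k,n)$ is the smallest $q$ for which an $(n,k,2k-t+1)_q$ code of size $\binom{n}{t}/\binom{k}{t}$ exists. *)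

theory Defs
  imports Complex_Main "HOL-Library.Disjoint_Sets"
begin

definition wt :: "nat list \<Rightarrow> nat" where
  "wt x = card {i. i < length x \<and> x ! i \<noteq> 0}"

definition hdist :: "nat list \<Rightarrow> nat list \<Rightarrow> nat" where
  "hdist x y = card {i. i < length x \<and> x ! i \<noteq> y ! i}"

definition J :: "nat \<Rightarrow> nat \<Rightarrow> nat \<Rightarrow> nat list set" where
  "J q n w = {x. length x = n \<and> set x \<subseteq> {0..<q} \<and> wt x = w}"

definition is_code :: "nat \<Rightarrow> nat \<Rightarrow> nat \<Rightarrow> nat \<Rightarrow> nat \<Rightarrow> nat list set \<Rightarrow> bool" where
  "is_code q n w d M C \<longleftrightarrow> C \<subseteq> J q n w \<and> card C = M \<and>
     (\<forall>x\<in>C. \<forall>y\<in>C. x \<noteq> y \<longrightarrow> d \<le> hdist x y)"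

definition steiner_system :: "nat \<Rightarrow> nat \<Rightarrow> nat \<Rightarrow> 'a set \<Rightarrow> 'a set set \<Rightarrow> bool" where
  "steiner_system t k n N B \<longleftrightarrow> finite N \<and> card N = n \<and>
     (\<forall>b\<in>B. b \<subseteq> N \<and> card b = k) \<and>
     (\<forall>T. T \<subseteq> N \<and> card T = t \<longrightarrow> (\<exists>!b. b \<in> B \<and> T \<subseteq> b))"

definition derived_blocks :: "'a set \<Rightarrow> 'a set set \<Rightarrow> 'a set set" where
  "derived_blocks \<alpha> B = {\<beta> - \<alpha> | \<beta>. \<beta> \<in> B \<and> \<alpha> \<subseteq> \<beta>}"

definition chi :: "'a set set \<Rightarrow> nat" where
  "chi B = (LEAST k. \<exists>P. partition_on B P \<and> card P = k \<and>
     (\<forall>c\<in>P. \<forall>b\<in>c. \<forall>b'\<in>c. b \<noteq> b' \<longrightarrow> b \<inter> b' = {}))"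

definition q0' :: "nat \<Rightarrow> nat \<Rightarrow> nat \<Rightarrow> nat" where
  "q0' t k n = (LEAST q. \<exists>C. is_code q n k (2*k - t + 1) ((n choose t) div (k choose t)) C)"

end

theory Submission
  imports Defs
begin


lemma card_supersets:
  fixes X S :: "'a set"
  assumes "finite X" "S \<subseteq> X" "card S \<le> t"
  shows "card {T. S \<subseteq> T \<and> T \<subseteq> X \<and> card T = t} = (card X - card S) choose (t - card S)"
proof -
  have fS: "finite S" using assms finite_subset by blast
  have "{T. S \<subseteq> T \<and> T \<subseteq> X \<and> card T = t} = (\<lambda>U. U \<union> S) ` {U. U \<subseteq> X - S \<and> card U = t - card S}"
  proof (rule set_eqI, rule iffI)
    fix T assume "T \<in> {T. S \<subseteq> T \<and> T \<subseteq> X \<and> card T = t}"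
    hence T: "S \<subseteq> T" "T \<subseteq> X" "card T = t" by auto
    have "finite T" using T assms finite_subset by blast
    hence "card (T - S) = t - card S" using T by (simp add: card_Diff_subset fS)
    moreover have "T = (T - S) \<union> S" using T by blast
    ultimately show "T \<in> (\<lambda>U. U \<union> S) ` {U. U \<subseteq> X - S \<and> card U = t - card S}"
      using T by blast
  next
    fix T assume "T \<in> (\<lambda>U. U \<union> S) ` {U. U \<subseteq> X - S \<and> card U = t - card S}"
    then obtain U where U: "U \<subseteq> X - S" "card U = t - card S" "T = U \<union> S" by auto
    have "finite U" using U assms finite_subset by blast
    moreover have "U \<inter> S = {}" using U by blast
    ultimately have "card T = card U + card S" using U fS by (simp add: card_Un_disjoint)
    thus "T \<in> {T. S \<subseteq> T \<and> T \<subseteq> X \<and> card T = t}" using U assms by auto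
  qed
  moreover have "inj_on (\<lambda>U. U \<union> S) {U. U \<subseteq> X - S \<and> card U = t - card S}"
  proof (rule inj_onI)
    fix U V assume "U \<in> {U. U \<subseteq> X - S \<and> card U = t - card S}" "V \<in> {U. U \<subseteq> X - S \<and> card U = t - card S}"
      "U \<union> S = V \<union> S"
    hence "U = (U \<union> S) - S" "V = (V \<union> S) - S" by auto
    thus "U = V" using \<open>U \<union> S = V \<union> S\<close> by simp
  qed
  ultimately have "card {T. S \<subseteq> T \<and> T \<subseteq> X \<and> card T = t} = card {U. U \<subseteq> X - S \<and> card U = t - card S}"
    by (simp add: card_image)
  also have "\<dots> = card (X - S) choose (t - card S)" using assms by (simp add: n_subsets)
  also have "card (X - S) = card X - card S" using assms fS by (simp add: card_Diff_subset)
  finally show ?thesis .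
qed

lemma steiner_finite:
  assumes "steiner_system t k n N B" shows "finite B"
proof -
  have "B \<subseteq> Pow N" using assms unfolding steiner_system_def by auto
  moreover have "finite N" using assms unfolding steiner_system_def by auto
  ultimately show ?thesis using finite_subset by blast
qed

lemma steiner_count:
  assumes st: "steiner_system t k n N B" and S: "S \<subseteq> N" "card S \<le> t"
  shows "card {b\<in>B. S \<subseteq> b} * ((k - card S) choose (t - card S)) = (n - card S) choose (t - card S)"
proof -
  have fN: "finite N" and cN: "card N = n" and bl: "\<And>b. b\<in>B \<Longrightarrow> b \<subseteq> N \<and> card b = k"
    and un: "\<And>T. T \<subseteq> N \<Longrightarrow> card T = t \<Longrightarrow> \<exists>!b. b \<in> B \<and> T \<subseteq> b"
    using st unfolding steiner_system_def by blast+
  have fB: "finite B" using steiner_finite[OF st] .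
  define F where "F b = {T. S \<subseteq> T \<and> T \<subseteq> b \<and> card T = t}" for b
  have eq: "{T. S \<subseteq> T \<and> T \<subseteq> N \<and> card T = t} = (\<Union>b\<in>{b\<in>B. S \<subseteq> b}. F b)"
  proof (rule set_eqI, rule iffI)
    fix T assume "T \<in> {T. S \<subseteq> T \<and> T \<subseteq> N \<and> card T = t}"
    hence T: "S \<subseteq> T" "T \<subseteq> N" "card T = t" by auto
    then obtain b where "b \<in> B" "T \<subseteq> b" using un by blast
    thus "T \<in> (\<Union>b\<in>{b\<in>B. S \<subseteq> b}. F b)" using T unfolding F_def by blast
  next
    fix T assume "T \<in> (\<Union>b\<in>{b\<in>B. S \<subseteq> b}. F b)"
    thus "T \<in> {T. S \<subseteq> T \<and> T \<subseteq> N \<and> card T = t}" unfolding F_def using bl by blast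
  qed
  have "card (\<Union>b\<in>{b\<in>B. S \<subseteq> b}. F b) = (\<Sum>b\<in>{b\<in>B. S \<subseteq> b}. card (F b))"
  proof (rule card_UN_disjoint)
    show "finite {b\<in>B. S \<subseteq> b}" using fB by simp
    show "\<forall>i\<in>{b\<in>B. S \<subseteq> b}. finite (F i)"
    proof
      fix b assume "b \<in> {b\<in>B. S \<subseteq> b}"
      hence "finite b" using bl[of b] finite_subset[OF _ fN] by blast
      have "F b \<subseteq> Pow b" unfolding F_def by blast
      thus "finite (F b)" using \<open>finite b\<close> by (simp add: finite_subset)
    qed
    show "\<forall>i\<in>{b\<in>B. S \<subseteq> b}. \<forall>j\<in>{b\<in>B. S \<subseteq> b}. i \<noteq> j \<longrightarrow> F i \<inter> F j = {}"
    proof (intro ballI impI)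
      fix i j assume i: "i \<in> {b\<in>B. S \<subseteq> b}" and j: "j \<in> {b\<in>B. S \<subseteq> b}" and ij: "i \<noteq> j"
      show "F i \<inter> F j = {}"
      proof (rule ccontr)
        assume "F i \<inter> F j \<noteq> {}"
        then obtain T where T: "S \<subseteq> T" "T \<subseteq> i" "T \<subseteq> j" "card T = t" unfolding F_def by blast
        have "T \<subseteq> N" using T i bl by blast
        thus False using un[of T] T i j ij by blast
      qed
    qed
  qed
  also have "\<dots> = (\<Sum>b\<in>{b\<in>B. S \<subseteq> b}. (k - card S) choose (t - card S))"
  proof (rule sum.cong)
    fix b assume b: "b \<in> {b\<in>B. S \<subseteq> b}"
    hence "finite b" "card b = k" using bl[of b] finite_subset[OF _ fN] by blast+
    thus "card (F b) = (k - card S) choose (t - card S)" unfolding F_def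
      using card_supersets[of b S t] b S by simp
  qed simp
  also have "\<dots> = card {b\<in>B. S \<subseteq> b} * ((k - card S) choose (t - card S))" by simp
  finally have "card {T. S \<subseteq> T \<and> T \<subseteq> N \<and> card T = t} = card {b\<in>B. S \<subseteq> b} * ((k - card S) choose (t - card S))"
    using eq by simp
  thus ?thesis using card_supersets[OF fN S] cN by simp
qed



lemma steiner_unique:
  assumes "steiner_system t k n N B" "T \<subseteq> N" "card T = t"
  shows "\<exists>!b. b \<in> B \<and> T \<subseteq> b"
proof -
  from assms(1) have "\<forall>T. T \<subseteq> N \<and> card T = t \<longrightarrow> (\<exists>!b. b \<in> B \<and> T \<subseteq> b)"
    unfolding steiner_system_def by (elim conjE)
  hence "T \<subseteq> N \<and> card T = t \<longrightarrow> (\<exists>!b. b \<in> B \<and> T \<subseteq> b)" by (rule spec)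
  thus ?thesis using assms(2,3) by (rule mp[OF _ conjI])
qed

lemma steiner_inter:
  assumes st: "steiner_system t k n N B" and b: "b \<in> B" "b' \<in> B" "b \<noteq> b'"
  shows "card (b \<inter> b') < t"
proof (rule ccontr)
  assume "\<not> card (b \<inter> b') < t"
  have bl: "b \<subseteq> N" "b' \<subseteq> N" "finite N" using st b unfolding steiner_system_def by blast+
  have "t \<le> card (b \<inter> b')" using \<open>\<not> card (b \<inter> b') < t\<close> by simp
  then obtain T where T: "T \<subseteq> b \<inter> b'" "card T = t"
    by (rule obtain_subset_with_card_n)
  have "T \<subseteq> N" using T(1) bl(1) by auto
  hence "\<exists>!c. c \<in> B \<and> T \<subseteq> c" using steiner_unique[OF st] T(2) by blast
  then obtain c where c: "\<And>y. y \<in> B \<and> T \<subseteq> y \<Longrightarrow> y = c" by blast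
  have "b = c" using c[of b] T(1) b(1) by blast
  moreover have "b' = c" using c[of b'] T(1) b(2) by blast
  ultimately show False using b(3) by simp
qed

lemma chi_col:
  assumes "finite D"
  shows "\<exists>col. (\<forall>x\<in>D. col x < chi D) \<and> (\<forall>x\<in>D. \<forall>y\<in>D. x \<noteq> y \<and> col x = col y \<longrightarrow> x \<inter> y = {})"
proof -
  let ?Q = "\<lambda>k. \<exists>P. partition_on D P \<and> card P = k \<and>
     (\<forall>c\<in>P. \<forall>b\<in>c. \<forall>b'\<in>c. b \<noteq> b' \<longrightarrow> b \<inter> b' = {})"
  have "?Q (card ((\<lambda>x. {x}) ` D))"
    using partition_on_singletons[of D] by auto
  hence "?Q (chi D)" unfolding chi_def by (rule LeastI)
  then obtain P where P: "partition_on D P" "card P = chi D"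
    "\<forall>c\<in>P. \<forall>b\<in>c. \<forall>b'\<in>c. b \<noteq> b' \<longrightarrow> b \<inter> b' = {}" by blast
  have fP: "finite P" using finite_elements[OF assms P(1)] .
  obtain h where h: "bij_betw h P {0..<card P}" using ex_bij_betw_finite_nat[OF fP] by blast
  define col where "col x = h (THE c. c \<in> P \<and> x \<in> c)" for x
  have the: "(THE c. c \<in> P \<and> x \<in> c) \<in> P \<and> x \<in> (THE c. c \<in> P \<and> x \<in> c)" if "x \<in> D" for x
  proof -
    have ex: "\<exists>c. c \<in> P \<and> x \<in> c" using partition_onD1[OF P(1)] that by blast
    have "\<exists>!c. c \<in> P \<and> x \<in> c"
    proof (rule ex_ex1I[OF ex])
      fix c c' assume "c \<in> P \<and> x \<in> c" "c' \<in> P \<and> x \<in> c'"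
      thus "c = c'" using partition_onD2[OF P(1)] unfolding disjoint_def by blast
    qed
    thus ?thesis by (rule theI')
  qed
  show ?thesis
  proof (intro exI conjI ballI impI)
    fix x assume "x \<in> D"
    thus "col x < chi D" unfolding col_def using the[of x] h P(2) bij_betwE by fastforce
  next
    fix x y assume xy: "x \<in> D" "y \<in> D" "x \<noteq> y \<and> col x = col y"
    have "(THE c. c \<in> P \<and> x \<in> c) = (THE c. c \<in> P \<and> y \<in> c)"
    proof (rule inj_onD[OF bij_betw_imp_inj_on[OF h]])
      show "h (THE c. c \<in> P \<and> x \<in> c) = h (THE c. c \<in> P \<and> y \<in> c)" using conjunct2[OF xy(3)] unfolding col_def .
      show "(THE c. c \<in> P \<and> x \<in> c) \<in> P" using the[OF xy(1)] by (rule conjunct1)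
      show "(THE c. c \<in> P \<and> y \<in> c) \<in> P" using the[OF xy(2)] by (rule conjunct1)
    qed
    define c where "c = (THE c. c \<in> P \<and> x \<in> c)"
    have "c \<in> P" "x \<in> c" using the[OF xy(1)] unfolding c_def by auto
    moreover have "y \<in> c" using the[OF xy(2)] \<open>(THE c. c \<in> P \<and> x \<in> c) = (THE c. c \<in> P \<and> y \<in> c)\<close> unfolding c_def by auto
    ultimately show "x \<inter> y = {}" using P(3) conjunct1[OF xy(3)] by blast
  qed
qed

definition cyc :: "nat \<Rightarrow> nat \<Rightarrow> nat \<Rightarrow> nat set" where
  "cyc n m i = (\<lambda>j. (i + j) mod n) ` {..<m}"

lemma mod_cancel_nat:
  fixes a b c n :: nat
  assumes "(a + b) mod n = (a + c) mod n" "b < n" "c < n"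
  shows "b = c"
proof -
  have "int b mod int n = int c mod int n"
  proof -
    have "(int a + int b) mod int n = (int a + int c) mod int n"
      using assms(1) by (metis of_nat_add of_nat_mod)
    hence "(int a + int b - int a) mod int n = (int a + int c - int a) mod int n"
      by (metis mod_diff_cong)
    thus ?thesis by simp
  qed
  thus ?thesis using assms by simp
qed

lemma cyc_props:
  assumes "0 < m" "m < n" "i < n"
  shows "i \<in> cyc n m i" "cyc n m i \<subseteq> {0..<n}" "card (cyc n m i) = m"
proof -
  show "i \<in> cyc n m i" unfolding cyc_def using assms by (auto intro!: image_eqI[of _ _ 0])
  show "cyc n m i \<subseteq> {0..<n}"
  proof
    fix x assume "x \<in> cyc n m i"
    then obtain j where "x = (i + j) mod n" unfolding cyc_def by blast
    thus "x \<in> {0..<n}" using assms by simp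
  qed
  have "inj_on (\<lambda>j. (i + j) mod n) {..<m}"
  proof (rule inj_onI)
    fix x y assume "x \<in> {..<m}" "y \<in> {..<m}" "(i + x) mod n = (i + y) mod n"
    thus "x = y" using mod_cancel_nat[of i x n y] assms by simp
  qed
  thus "card (cyc n m i) = m" unfolding cyc_def by (simp add: card_image)
qed

lemma cyc_inj:
  assumes "0 < m" "m < n" "i < n" "j < n" "cyc n m i = cyc n m j"
  shows "i = j"
proof (rule ccontr)
  assume ij: "i \<noteq> j"
  have "i \<in> cyc n m j" using cyc_props(1)[OF assms(1,2,3)] assms(5) by simp
  then obtain d where d: "d < m" "i = (j + d) mod n" unfolding cyc_def by auto
  have "d \<noteq> 0"
  proof
    assume "d = 0" thus False using d ij assms(4) by simp
  qed
  hence "(i + (n - 1)) mod n = (j + (d - 1)) mod n"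
  proof -
    have "(i + (n - 1)) mod n = ((j + d) + (n - 1)) mod n" using d by (simp add: mod_add_left_eq)
    also have "(j + d) + (n - 1) = (j + (d - 1)) + n" using \<open>d \<noteq> 0\<close> assms by simp
    finally show ?thesis by simp
  qed
  moreover have "(j + (d - 1)) mod n \<in> cyc n m j" unfolding cyc_def using d \<open>d \<noteq> 0\<close>
    by (intro image_eqI[of _ _ "d - 1"]) auto
  ultimately have "(i + (n - 1)) mod n \<in> cyc n m j" by simp
  hence "(i + (n - 1)) mod n \<in> cyc n m i" using assms(5) by simp
  then obtain e where e: "e < m" "(i + (n - 1)) mod n = (i + e) mod n" unfolding cyc_def by auto
  hence "n - 1 = e" using mod_cancel_nat[of i "n - 1" n e] assms by simp
  thus False using e assms by simp
qed



lemma code_from_col: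
  fixes B :: "nat set set" and c :: "nat \<Rightarrow> nat set \<Rightarrow> nat"
  assumes st: "steiner_system t w n {0..<n} B" and q0: "0 < q" and t1: "1 \<le> t" "t \<le> w"
    and pos: "\<forall>b\<in>B. \<forall>i\<in>b. 0 < c i b \<and> c i b < q"
    and agr: "\<forall>b\<in>B. \<forall>b'\<in>B. b \<noteq> b' \<longrightarrow> card {i\<in>b\<inter>b'. c i b = c i b'} + card (b\<inter>b') \<le> t - 1"
  shows "\<exists>C. is_code q n w (2*w - t + 1) (card B) C"
proof -
  have bl: "\<And>b. b \<in> B \<Longrightarrow> b \<subseteq> {0..<n} \<and> card b = w"
    using st unfolding steiner_system_def by blast
  have fb: "\<And>b. b \<in> B \<Longrightarrow> finite b" using bl finite_subset[OF _ finite_atLeastLessThan] by blast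
  define f where "f b i = (if i \<in> b then c i b else 0)" for b i
  define word where "word b = map (f b) [0..<n]" for b
  have nth: "\<And>b i. i < n \<Longrightarrow> word b ! i = f b i" unfolding word_def by simp
  have len: "\<And>b. length (word b) = n" unfolding word_def by simp
  have nz: "\<And>b i. b \<in> B \<Longrightarrow> f b i \<noteq> 0 \<longleftrightarrow> i \<in> b"
    unfolding f_def using pos by auto
  have inJ: "word b \<in> J q n w" if b: "b \<in> B" for b
  proof -
    have "set (word b) \<subseteq> {0..<q}"
    proof
      fix x assume "x \<in> set (word b)"
      then obtain i where "x = f b i" unfolding word_def by auto
      thus "x \<in> {0..<q}" using pos b q0 unfolding f_def by auto
    qed
    moreover have "{i. i < length (word b) \<and> word b ! i \<noteq> 0} = b"
    proof (rule set_eqI)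
      fix i show "i \<in> {i. i < length (word b) \<and> word b ! i \<noteq> 0} \<longleftrightarrow> i \<in> b"
        using nth[of i b] len[of b] nz[OF b, of i] bl[OF b] by auto
    qed
    ultimately show ?thesis unfolding J_def wt_def using len[of b] bl[OF b] by simp
  qed
  have inj: "inj_on word B"
  proof (rule inj_onI)
    fix b b' assume b: "b \<in> B" "b' \<in> B" "word b = word b'"
    show "b = b'"
    proof (rule set_eqI)
      fix i show "i \<in> b \<longleftrightarrow> i \<in> b'"
      proof (cases "i < n")
        case True
        hence "f b i = f b' i" using nth b(3) by metis
        thus ?thesis using nz[OF b(1), of i] nz[OF b(2), of i] by auto
      next
        case False thus ?thesis using bl[OF b(1)] bl[OF b(2)] by auto
      qed
    qed
  qed
  have dist: "2*w - t + 1 \<le> hdist (word b) (word b')" if b: "b \<in> B" "b' \<in> B" "b \<noteq> b'" for b b'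
  proof -
    define A where "A = {i\<in>b\<inter>b'. c i b = c i b'}"
    define s where "s = card (b \<inter> b')"
    have fI: "finite (b \<inter> b')" using fb[OF b(1)] by simp
    have as: "card A + s \<le> t - 1" using agr b unfolding A_def s_def by blast
    have A_sub: "A \<subseteq> b \<inter> b'" unfolding A_def by blast
    have sw: "s \<le> w" unfolding s_def using bl[OF b(1)] card_mono[OF fb[OF b(1)], of "b \<inter> b'"] by auto
    have c1: "card (b - b') = w - s" unfolding s_def using card_Diff_subset_Int[of b b'] fb[OF b(1)] bl[OF b(1)]
      by (simp add: card_Diff_subset_Int)
    have c2: "card (b' - b) = w - s" unfolding s_def using fb[OF b(2)] bl[OF b(2)]
      by (simp add: card_Diff_subset_Int Int_commute)
    have c3: "card ((b \<inter> b') - A) = s - card A" unfolding s_def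
      using card_Diff_subset[OF finite_subset[OF A_sub fI] A_sub] .
    have sub: "(b - b') \<union> (b' - b) \<union> ((b \<inter> b') - A) \<subseteq> {i. i < length (word b) \<and> word b ! i \<noteq> word b' ! i}"
    proof
      fix i assume i: "i \<in> (b - b') \<union> (b' - b) \<union> ((b \<inter> b') - A)"
      hence "i < n" using bl[OF b(1)] bl[OF b(2)] by auto
      moreover have "f b i \<noteq> f b' i"
        using i nz[OF b(1), of i] nz[OF b(2), of i] unfolding A_def f_def by auto
      ultimately show "i \<in> {i. i < length (word b) \<and> word b ! i \<noteq> word b' ! i}"
        using nth len by simp
    qed
    have fin: "finite {i. i < length (word b) \<and> word b ! i \<noteq> word b' ! i}" by simp
    have "card ((b - b') \<union> (b' - b) \<union> ((b \<inter> b') - A)) = (w - s) + (w - s) + (s - card A)"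
    proof -
      have "card ((b - b') \<union> (b' - b)) = card (b - b') + card (b' - b)"
        by (rule card_Un_disjoint) (use fb[OF b(1)] fb[OF b(2)] in auto)
      moreover have "card ((b - b') \<union> (b' - b) \<union> ((b \<inter> b') - A)) = card ((b - b') \<union> (b' - b)) + card ((b \<inter> b') - A)"
        by (rule card_Un_disjoint) (use fb[OF b(1)] fb[OF b(2)] in auto)
      ultimately show ?thesis using c1 c2 c3 by simp
    qed
    hence "(w - s) + (w - s) + (s - card A) \<le> hdist (word b) (word b')"
      unfolding hdist_def using card_mono[OF fin sub] by simp
    moreover have "card A \<le> s" unfolding s_def using card_mono[OF fI A_sub] .
    ultimately show ?thesis using as sw t1 by linarith
  qed
  show ?thesis
  proof (intro exI)
    show "is_code q n w (2*w - t + 1) (card B) (word ` B)"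
      unfolding is_code_def
    proof (intro conjI)
      show "word ` B \<subseteq> J q n w" using inJ by blast
      show "card (word ` B) = card B" using card_image[OF inj] .
      show "\<forall>x\<in>word ` B. \<forall>y\<in>word ` B. x \<noteq> y \<longrightarrow> 2 * w - t + 1 \<le> hdist x y"
        using dist by blast
    qed
  qed
qed



theorem mainTheorem12:
  fixes t w n :: nat
  assumes "3 \<le> t" and "t \<le> w" and "w < n"
    and "\<exists>B :: nat set set. steiner_system t w n {0..<n} B"
  shows "real (q0' t w n) \<le>
    real (n - 1 choose (t - 1)) / real (w - 1 choose (t - 1))
    - real (n - t + 2 choose 2) / real (w - t + 2 choose 2)
    + real (Min {Max {chi (derived_blocks \<alpha> B) | \<alpha>. \<alpha> \<subseteq> {0..<n} \<and> card \<alpha> = t - 2}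
                 | B :: nat set set. steiner_system t w n {0..<n} B})
    + 1"
proof -
  define N where "N = {0..<n}"
  define m where "m = t - 2"
  define Xs where "Xs B = {chi (derived_blocks \<alpha> B) | \<alpha>. \<alpha> \<subseteq> N \<and> card \<alpha> = m}" for B :: "nat set set"
  define SB where "SB = {B :: nat set set. steiner_system t w n N B}"
  have m0: "0 < m" "m < n" using assms unfolding m_def by auto
  have finXs: "finite (Xs B)" for B
  proof -
    have "finite {\<alpha>. \<alpha> \<subseteq> N \<and> card \<alpha> = m}"
      by (rule finite_subset[of _ "Pow N"]) (auto simp: N_def)
    thus ?thesis unfolding Xs_def by (rule finite_image_set)
  qed
  have finSB: "finite SB"
  proof -
    have "SB \<subseteq> Pow (Pow N)" unfolding SB_def steiner_system_def by auto
    moreover have "finite (Pow (Pow N))" unfolding N_def by simp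
    ultimately show ?thesis by (rule finite_subset)
  qed
  have "finite {Max (Xs B) | B. B \<in> SB}" using finSB by simp
  moreover have "{Max (Xs B) | B. B \<in> SB} \<noteq> {}" using assms(4) unfolding SB_def N_def by auto
  ultimately have "Min {Max (Xs B) | B. B \<in> SB} \<in> {Max (Xs B) | B. B \<in> SB}" by (rule Min_in)
  then obtain B0 where B0: "B0 \<in> SB" "Min {Max (Xs B) | B. B \<in> SB} = Max (Xs B0)" by auto
  have st: "steiner_system t w n N B0" using B0 unfolding SB_def by simp
  define M where "M = Max (Xs B0)"
  have minM: "Min {Max {chi (derived_blocks \<alpha> B) | \<alpha>. \<alpha> \<subseteq> {0..<n} \<and> card \<alpha> = t - 2}
                 | B :: nat set set. steiner_system t w n {0..<n} B} = M"
    using B0(2) unfolding M_def Xs_def SB_def N_def m_def by simp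
  have fB0: "finite B0" using steiner_finite[OF st] .
  define al where "al i = cyc n m i" for i
  have alp: "i \<in> al i" "al i \<subseteq> N" "card (al i) = m" if "i < n" for i
    using cyc_props[OF m0 that] unfolding al_def N_def by auto
  define Dd where "Dd i = derived_blocks (al i) B0" for i
  have finD: "finite (Dd i)" for i
  proof -
    have "Dd i = (\<lambda>b. b - al i) ` {b\<in>B0. al i \<subseteq> b}" unfolding Dd_def derived_blocks_def by auto
    thus ?thesis using fB0 by simp
  qed
  have chiM: "chi (Dd i) \<le> M" if "i < n" for i
  proof -
    have "chi (Dd i) \<in> Xs B0" unfolding Xs_def Dd_def using alp[OF that] by blast
    thus ?thesis unfolding M_def using finXs by (rule Max_ge[rotated])
  qed
  have "\<forall>i. \<exists>col. (\<forall>x\<in>Dd i. col x < chi (Dd i)) \<and> (\<forall>x\<in>Dd i. \<forall>y\<in>Dd i. x \<noteq> y \<and> col x = col y \<longrightarrow> x \<inter> y = {})"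
    using chi_col[OF finD] by blast
  then obtain col where col: "\<And>i x. x \<in> Dd i \<Longrightarrow> col i x < chi (Dd i)"
    "\<And>i x y. x \<in> Dd i \<Longrightarrow> y \<in> Dd i \<Longrightarrow> x \<noteq> y \<Longrightarrow> col i x = col i y \<Longrightarrow> x \<inter> y = {}"
    by metis
  define E where "E i = {b\<in>B0. i \<in> b \<and> \<not> al i \<subseteq> b}" for i
  have finE: "finite (E i)" for i unfolding E_def using fB0 by simp
  have "\<forall>i. \<exists>g. bij_betw g (E i) {0..<card (E i)}" using ex_bij_betw_finite_nat[OF finE] by blast
  then obtain g where g: "\<And>i. bij_betw (g i) (E i) {0..<card (E i)}" by metis
  have cntR: "card {b\<in>B0. {i} \<subseteq> b} * (w - 1 choose (t - 1)) = (n - 1 choose (t - 1))" if "i < n" for i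
    using steiner_count[OF st, of "{i}"] that assms unfolding N_def by simp
  have cntL: "card {b\<in>B0. al i \<subseteq> b} * (w - t + 2 choose 2) = (n - t + 2 choose 2)" if "i < n" for i
  proof -
    have "card (al i) \<le> t" using alp[OF that] unfolding m_def by simp
    from steiner_count[OF st alp(2)[OF that] this] show ?thesis
      using alp[OF that] assms unfolding m_def by (simp add: Suc_diff_le numeral_2_eq_2)
  qed
  have pos1: "0 < (w - 1 choose (t - 1))" using assms by simp
  have pos2: "0 < (w - t + 2 choose 2)" using assms by simp
  define L where "L = (n - t + 2 choose 2) div (w - t + 2 choose 2)"
  define R where "R = (n - 1 choose (t - 1)) div (w - 1 choose (t - 1))"
  have Ri: "card {b\<in>B0. {i} \<subseteq> b} = R" if "i < n" for i
    unfolding R_def using cntR[OF that] pos1 by (metis nonzero_mult_div_cancel_right less_not_refl2)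
  have Li: "card {b\<in>B0. al i \<subseteq> b} = L" if "i < n" for i
    unfolding L_def using cntL[OF that] pos2 by (metis nonzero_mult_div_cancel_right less_not_refl2)
  have LR: "L \<le> R" and cE: "card (E i) = R - L" if "i < n" for i
  proof -
    have sub: "{b\<in>B0. al i \<subseteq> b} \<subseteq> {b\<in>B0. {i} \<subseteq> b}" using alp(1)[OF that] by blast
    have "E i = {b\<in>B0. {i} \<subseteq> b} - {b\<in>B0. al i \<subseteq> b}" unfolding E_def by blast
    hence "card (E i) = card {b\<in>B0. {i} \<subseteq> b} - card {b\<in>B0. al i \<subseteq> b}"
      using card_Diff_subset[OF _ sub] fB0 by simp
    thus "card (E i) = R - L" using Ri[OF that] Li[OF that] by simp
    show "L \<le> R" using card_mono[OF _ sub] fB0 Ri[OF that] Li[OF that] by simp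
  qed
  have RL: "real R = real (n - 1 choose (t - 1)) / real (w - 1 choose (t - 1))"
    using cntR[of 0] Ri[of 0] assms pos1 by (simp add: field_simps flip: of_nat_mult)
  have LL: "real L = real (n - t + 2 choose 2) / real (w - t + 2 choose 2)"
    using cntL[of 0] Li[of 0] assms pos2 by (simp add: field_simps flip: of_nat_mult)
  have bl: "\<And>b. b \<in> B0 \<Longrightarrow> b \<subseteq> N \<and> card b = w"
    using st unfolding steiner_system_def by blast
  define c where "c i b = (if al i \<subseteq> b then 1 + col i (b - al i) else M + 1 + g i b)" for i b
  define q where "q = M + (R - L) + 1"
  have inD: "b - al i \<in> Dd i" if "b \<in> B0" "al i \<subseteq> b" for b i
    unfolding Dd_def derived_blocks_def using that by blast
  have inE: "b \<in> E i" if "b \<in> B0" "i \<in> b" "\<not> al i \<subseteq> b" for b i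
    unfolding E_def using that by blast
  have gE: "g i b < R - L" if "b \<in> E i" "i < n" for b i
    using bij_betwE[OF g[of i]] that cE[OF that(2)] by auto
  have colM: "col i (b - al i) < M" if "b \<in> B0" "al i \<subseteq> b" "i < n" for b i
    using col(1)[OF inD[OF that(1,2)]] chiM[OF that(3)] by simp
  have pos: "\<forall>b\<in>B0. \<forall>i\<in>b. 0 < c i b \<and> c i b < q"
  proof (intro ballI)
    fix b i assume b: "b \<in> B0" and i: "i \<in> b"
    have "i < n" using bl[OF b] i unfolding N_def by auto
    show "0 < c i b \<and> c i b < q"
    proof (cases "al i \<subseteq> b")
      case True thus ?thesis unfolding c_def q_def using colM[OF b True \<open>i < n\<close>] by simp
    next
      case False thus ?thesis unfolding c_def q_def using gE[OF inE[OF b i False] \<open>i < n\<close>] by simp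
    qed
  qed
  have key: "al i = b \<inter> b'" if b: "b \<in> B0" "b' \<in> B0" "b \<noteq> b'" and i: "i \<in> b" "i \<in> b'"
    and eq: "c i b = c i b'" for b b' i
  proof -
    have "i < n" using bl[OF b(1)] i unfolding N_def by auto
    show ?thesis
    proof (cases "al i \<subseteq> b")
      case T1: True
      show ?thesis
      proof (cases "al i \<subseteq> b'")
        case T2: True
        have ceq: "col i (b - al i) = col i (b' - al i)" using eq T1 T2 unfolding c_def by simp
        have "b - al i \<noteq> b' - al i"
        proof
          assume "b - al i = b' - al i"
          hence "(b - al i) \<union> al i = (b' - al i) \<union> al i" by simp
          thus False using T1 T2 b(3) by (simp add: Un_absorb2)
        qed
        hence "(b - al i) \<inter> (b' - al i) = {}" using col(2)[OF inD[OF b(1) T1] inD[OF b(2) T2] _ ceq] by blast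
        thus ?thesis using T1 T2 by blast
      next
        case F2: False
        have "c i b < M + 1" unfolding c_def using T1 colM[OF b(1) T1 \<open>i < n\<close>] by simp
        moreover have "M + 1 \<le> c i b'" unfolding c_def using F2 by simp
        ultimately show ?thesis using eq by simp
      qed
    next
      case F1: False
      show ?thesis
      proof (cases "al i \<subseteq> b'")
        case T2: True
        have "c i b' < M + 1" unfolding c_def using T2 colM[OF b(2) T2 \<open>i < n\<close>] by simp
        moreover have "M + 1 \<le> c i b" unfolding c_def using F1 by simp
        ultimately show ?thesis using eq by simp
      next
        case F2: False
        have "g i b = g i b'" using eq F1 F2 unfolding c_def by simp
        hence "b = b'" using bij_betw_imp_inj_on[OF g[of i]] inE[OF b(1) i(1) F1] inE[OF b(2) i(2) F2]
          by (simp add: inj_on_def)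
        thus ?thesis using b(3) by simp
      qed
    qed
  qed
  have agr: "\<forall>b\<in>B0. \<forall>b'\<in>B0. b \<noteq> b' \<longrightarrow> card {i\<in>b\<inter>b'. c i b = c i b'} + card (b\<inter>b') \<le> t - 1"
  proof (intro ballI impI)
    fix b b' assume b: "b \<in> B0" "b' \<in> B0" "b \<noteq> b'"
    define A where "A = {i\<in>b\<inter>b'. c i b = c i b'}"
    have lt: "card (b \<inter> b') < t" using steiner_inter[OF st b] .
    show "card A + card (b\<inter>b') \<le> t - 1"
    proof (cases "A = {}")
      case True thus ?thesis using lt by simp
    next
      case False
      then obtain i where iA: "i \<in> A" by blast
      have "i < n" using iA bl[OF b(1)] unfolding A_def N_def by auto
      have ai: "al i = b \<inter> b'" using key[OF b] iA unfolding A_def by blast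
      hence s: "card (b \<inter> b') = m" using alp(3)[OF \<open>i < n\<close>] by simp
      have finA: "finite A" unfolding A_def using fB0 bl[OF b(1)] finite_subset[of b N] unfolding N_def by auto
      have "card A \<le> Suc 0"
      proof (subst card_le_Suc0_iff_eq[OF finA], intro ballI)
        fix x y assume x: "x \<in> A" and y: "y \<in> A"
        have "x < n" "y < n" using x y bl[OF b(1)] unfolding A_def N_def by auto
        moreover have "al x = al y" using key[OF b] x y unfolding A_def by auto
        ultimately show "x = y" using cyc_inj[OF m0] unfolding al_def by blast
      qed
      thus ?thesis using s assms unfolding m_def by simp
    qed
  qed
  have st': "steiner_system t w n {0..<n} B0" using st unfolding N_def .
  obtain C where C: "is_code q n w (2*w - t + 1) (card B0) C"
    using code_from_col[OF st', of q c] pos agr assms unfolding q_def by auto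
  have "card B0 * (w choose t) = n choose t" using steiner_count[OF st, of "{}"] by simp
  moreover have "0 < w choose t" using assms by simp
  ultimately have cB: "card B0 = (n choose t) div (w choose t)"
    by (metis nonzero_mult_div_cancel_right less_not_refl2)
  have "q0' t w n \<le> q" unfolding q0'_def using C cB by (auto intro: Least_le)
  hence "real (q0' t w n) \<le> real M + real R - real L + 1" unfolding q_def using LR[of 0] assms by simp
  thus ?thesis using RL LL minM by simp
qed


end
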